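(* For monomial ideals $J\subset I\subset S_f$, with $t$ a new variable, $\operatorname{sdepth}(I/J)[t]=\operatorname{sdepth}(I/J)[t,t^{-1}]=\operatorname{sdepth}(I/J)+1$. Consequently, for new variables $t_1,\ldots,t_r$, $\operatorname{sdepth}(I/J)[t_1^{\pm1},\ldots,t_r^{\pm1}]=\operatorname{sdepth}(I/J)+r$.
   Context: Let $K$ be a field, $S=K[x_1,\ldots,x_n]$, $A\subset\{1,\ldots,n\}$, $f=\prod_{j\in A}x_j$, and $S_f=K[x_1,\ldots,x_n,x_j^{-1}: j\in A]$. A monomial ideal of $S_f$ is an ideal generated by monomials $x_1^{a_1}\cdots x_n^{a_n}$ with $a_j\in\mathbb{Z}$ for $j\in A$ and $a_j\geq 0$ for $j\notin A$. For monomial ideals $J\subset I\subset S_f$, a Stanley space of $I/J$ is a free $K[Z]$-submodule $uK[Z]$ of $I/J$, where $u$ is a monomial in $I\setminus J$ and $Z\subset\{x_1,\ldots,x_n\}\cup\{x_j^{-1}: j\in A\}$ with $\{x_j,x_j^{-1}\}\not\subseteq Z$ for all $j\in A$; its dimension is $|Z|$. A Stanley decomposition of $I/J$ is a finite direct sum of Stanley spaces $I/J=\bigoplus_{i=1}^r u_iK[Z_i]$; its Stanley depth is $\min_i|Z_i|$, and $\operatorname{sdepth}(I/J)$ is the maximum of this over all Stanley decompositions. The same definitions are used for $(I/J)[t]$ and $(I/J)[t,t^{-1}]$, viewed as quotients of monomial ideals in the (localized) polynomial ring with the extra variable $t$ (resp. $t$ inverted), and likewise with several extra variables $t_1,\ldots,t_r$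 all inverted. *)

theory Defs
  imports Main
begin

text \<open>Monomials of S_f = K[x_0..x_{n-1}, x_j^{-1} : j in A] are identified with their
exponent vectors a :: nat => int, supported on {..<n}, with a i >= 0 for i not in A.
Since monomial ideals and Stanley decompositions of I/J are determined by the sets of
monomials involved, I/J is encoded by the monomial sets of I and J.\<close>

definition mons :: "nat \<Rightarrow> nat set \<Rightarrow> (nat \<Rightarrow> int) set" where
  "mons n A = {a. (\<forall>i. n \<le> i \<longrightarrow> a i = 0) \<and> (\<forall>i<n. i \<notin> A \<longrightarrow> 0 \<le> a i)}"

definition unitv :: "nat \<Rightarrow> nat \<Rightarrow> int" where
  "unitv i = (\<lambda>k. if k = i then 1 else 0)"

definition monomial_ideal :: "nat \<Rightarrow> nat set \<Rightarrow> (nat \<Rightarrow> int) set \<Rightarrow> bool" where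
  "monomial_ideal n A I \<longleftrightarrow> I \<subseteq> mons n A \<and>
     (\<forall>a\<in>I. \<forall>i<n. (\<lambda>k. a k + unitv i k) \<in> I) \<and> (\<forall>a\<in>I. \<forall>j\<in>A. (\<lambda>k. a k - unitv j k) \<in> I)"

text \<open>A Stanley space u K[Z] is encoded by a triple (u, Zp, Zn): Zp = {i. x_i in Z},
Zn = {j. x_j^{-1} in Z}. Its monomials are u * m, m a monomial of K[Z].\<close>
definition space :: "(nat \<Rightarrow> int) \<times> nat set \<times> nat set \<Rightarrow> (nat \<Rightarrow> int) set" where
  "space s = (case s of (u, Zp, Zn) \<Rightarrow>
     {(\<lambda>k. u k + b k) | b. (\<forall>i. i \<notin> Zp \<union> Zn \<longrightarrow> b i = 0) \<and> (\<forall>i\<in>Zp. 0 \<le> b i) \<and> (\<forall>i\<in>Zn. b i \<le> 0)})"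

definition sdim :: "(nat \<Rightarrow> int) \<times> nat set \<times> nat set \<Rightarrow> nat" where
  "sdim s = (case s of (u, Zp, Zn) \<Rightarrow> card Zp + card Zn)"

definition stanley_space :: "nat \<Rightarrow> nat set \<Rightarrow> (nat \<Rightarrow> int) set \<Rightarrow> (nat \<Rightarrow> int) set
    \<Rightarrow> (nat \<Rightarrow> int) \<times> nat set \<times> nat set \<Rightarrow> bool" where
  "stanley_space n A I J s = (case s of (u, Zp, Zn) \<Rightarrow>
     Zp \<subseteq> {..<n} \<and> Zn \<subseteq> A \<and> Zp \<inter> Zn = {} \<and> u \<in> I - J \<and> space s \<subseteq> I - J)"

definition stanley_decomp :: "nat \<Rightarrow> nat set \<Rightarrow> (nat \<Rightarrow> int) set \<Rightarrow> (nat \<Rightarrow> int) set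
    \<Rightarrow> ((nat \<Rightarrow> int) \<times> nat set \<times> nat set) set \<Rightarrow> bool" where
  "stanley_decomp n A I J D \<longleftrightarrow> finite D \<and> (\<forall>s\<in>D. stanley_space n A I J s) \<and>
     (\<forall>s\<in>D. \<forall>s'\<in>D. s \<noteq> s' \<longrightarrow> space s \<inter> space s' = {}) \<and>
     (\<Union>s\<in>D. space s) = I - J"

definition sdepth :: "nat \<Rightarrow> nat set \<Rightarrow> (nat \<Rightarrow> int) set \<Rightarrow> (nat \<Rightarrow> int) set \<Rightarrow> nat" where
  "sdepth n A I J = Max {Min (sdim ` D) | D. stanley_decomp n A I J D}"

text \<open>(I)[t] with t = x_n a new (non-inverted) variable.\<close>
definition ext_poly :: "nat \<Rightarrow> (nat \<Rightarrow> int) set \<Rightarrow> (nat \<Rightarrow> int) set" where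
  "ext_poly n I = {a. (\<lambda>i. if i = n then 0 else a i) \<in> I \<and> 0 \<le> a n \<and> (\<forall>i>n. a i = 0)}"

text \<open>(I)[t_1^{+-1},...,t_r^{+-1}] with t_k = x_{n+k-1} inverted new variables.\<close>
definition ext_laurent :: "nat \<Rightarrow> nat \<Rightarrow> (nat \<Rightarrow> int) set \<Rightarrow> (nat \<Rightarrow> int) set" where
  "ext_laurent n r I = {a. (\<lambda>i. if i < n then a i else 0) \<in> I \<and> (\<forall>i. n + r \<le> i \<longrightarrow> a i = 0)}"

end

theory Submission
  imports Defs "HOL-Library.FuncSet"
begin

lemma mem_space:
  "c \<in> space (u, Zp, Zn) \<longleftrightarrow> (\<forall>i. i \<notin> Zp \<union> Zn \<longrightarrow> c i = u i) \<and> (\<forall>i\<in>Zp. u i \<le> c i) \<and> (\<forall>i\<in>Zn. c i \<le> u i)"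
proof
  assume "c \<in> space (u, Zp, Zn)"
  then obtain b where "c = (\<lambda>k. u k + b k)" "\<forall>i. i \<notin> Zp \<union> Zn \<longrightarrow> b i = 0"
    "\<forall>i\<in>Zp. 0 \<le> b i" "\<forall>i\<in>Zn. b i \<le> 0"
    by (auto simp: space_def)
  then show "(\<forall>i. i \<notin> Zp \<union> Zn \<longrightarrow> c i = u i) \<and> (\<forall>i\<in>Zp. u i \<le> c i) \<and> (\<forall>i\<in>Zn. c i \<le> u i)"
    by auto
next
  assume h: "(\<forall>i. i \<notin> Zp \<union> Zn \<longrightarrow> c i = u i) \<and> (\<forall>i\<in>Zp. u i \<le> c i) \<and> (\<forall>i\<in>Zn. c i \<le> u i)"
  show "c \<in> space (u, Zp, Zn)" unfolding space_def
    apply simp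
    apply (rule exI[of _ "\<lambda>k. c k - u k"])
    using h by auto
qed

lemma u_in_space: "u \<in> space (u, Zp, Zn)"
  by (simp add: mem_space)

lemma sdim_simp[simp]: "sdim (u, Zp, Zn) = card Zp + card Zn"
  by (simp add: sdim_def)

lemma stanley_space_iff:
  "stanley_space n A I J (u, Zp, Zn) \<longleftrightarrow> Zp \<subseteq> {..<n} \<and> Zn \<subseteq> A \<and> Zp \<inter> Zn = {} \<and> space (u, Zp, Zn) \<subseteq> I - J"
  using u_in_space[of u Zp Zn] by (auto simp: stanley_space_def)

lemma box_finite:
  assumes "finite T"
  shows "finite {x :: nat \<Rightarrow> int. (\<forall>i. i \<notin> T \<longrightarrow> x i = 0) \<and> (\<forall>i\<in>T. lo i \<le> x i \<and> x i \<le> hi i)}"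
proof -
  have "{x :: nat \<Rightarrow> int. (\<forall>i. i \<notin> T \<longrightarrow> x i = 0) \<and> (\<forall>i\<in>T. lo i \<le> x i \<and> x i \<le> hi i)}
     \<subseteq> (\<lambda>f i. if i \<in> T then f i else 0) ` (PiE T (\<lambda>i. {lo i..hi i}))"
  proof
    fix x assume x: "x \<in> {x :: nat \<Rightarrow> int. (\<forall>i. i \<notin> T \<longrightarrow> x i = 0) \<and> (\<forall>i\<in>T. lo i \<le> x i \<and> x i \<le> hi i)}"
    show "x \<in> (\<lambda>f i. if i \<in> T then f i else 0) ` (PiE T (\<lambda>i. {lo i..hi i}))"
    proof
      show "x = (\<lambda>i. if i \<in> T then restrict x T i else 0)" using x by (auto simp: fun_eq_iff)
      show "restrict x T \<in> PiE T (\<lambda>i. {lo i..hi i})" using x by auto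
    qed
  qed
  moreover have "finite (PiE T (\<lambda>i. {lo i..hi i}))" using assms by (intro finite_PiE) auto
  ultimately show ?thesis by (meson finite_imageI finite_subset)
qed

lemma mi_step_up:
  assumes "monomial_ideal n A I" "a \<in> I" "i < n"
  shows "a(i := a i + 1) \<in> I"
proof -
  have "(\<lambda>k. a k + unitv i k) \<in> I" using assms by (auto simp: monomial_ideal_def)
  moreover have "(\<lambda>k. a k + unitv i k) = a(i := a i + 1)" by (auto simp: unitv_def fun_eq_iff)
  ultimately show ?thesis by simp
qed

lemma mi_step_down:
  assumes "monomial_ideal n A I" "a \<in> I" "i \<in> A"
  shows "a(i := a i - 1) \<in> I"
proof -
  have "(\<lambda>k. a k - unitv i k) \<in> I" using assms by (auto simp: monomial_ideal_def)
  moreover have "(\<lambda>k. a k - unitv i k) = a(i := a i - 1)" by (auto simp: unitv_def fun_eq_iff)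
  ultimately show ?thesis by simp
qed

lemma mi_move:
  assumes "monomial_ideal n A I" "a \<in> I" "i < n" "i \<in> A \<or> a i \<le> v"
  shows "a(i := v) \<in> I"
proof -
  have up: "a(i := a i + int m) \<in> I" for m
  proof (induction m)
    case 0 then show ?case using assms(2) by simp
  next
    case (Suc m)
    have "(a(i := a i + int m))(i := (a(i := a i + int m)) i + 1) \<in> I"
      by (rule mi_step_up[OF assms(1) Suc assms(3)])
    moreover have "(a(i := a i + int m))(i := (a(i := a i + int m)) i + 1) = a(i := a i + int (Suc m))"
      by (simp add: fun_eq_iff)
    ultimately show ?case by (simp only:)
  qed
  show ?thesis
  proof (cases "a i \<le> v")
    case True
    then have "v = a i + int (nat (v - a i))" by simp
    then show ?thesis using up[of "nat (v - a i)"] by metis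
  next
    case False
    then have iA: "i \<in> A" using assms(4) by auto
    have down: "a(i := a i - int m) \<in> I" for m
    proof (induction m)
      case 0 then show ?case using assms(2) by simp
    next
      case (Suc m)
      have "(a(i := a i - int m))(i := (a(i := a i - int m)) i - 1) \<in> I"
        by (rule mi_step_down[OF assms(1) Suc iA])
      moreover have "(a(i := a i - int m))(i := (a(i := a i - int m)) i - 1) = a(i := a i - int (Suc m))"
        by (simp add: fun_eq_iff)
      ultimately show ?case by (simp only:)
    qed
    from False have "v = a i - int (nat (a i - v))" by simp
    then show ?thesis using down[of "nat (a i - v)"] by metis
  qed
qed

lemma mi_upclosed_aux:
  assumes mi: "monomial_ideal n A I" and fin: "finite F"
  shows "\<forall>b. a \<in> I \<longrightarrow> F \<subseteq> {..<n} \<longrightarrow> (\<forall>i. i \<notin> F \<longrightarrow> b i = a i) \<longrightarrow> (\<forall>i\<in>F. i \<in> A \<or> a i \<le> b i) \<longrightarrow> b \<in> I"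
  using fin
proof (induction F rule: finite_induct)
  case empty
  then show ?case by (auto simp: fun_eq_iff)
next
  case (insert x F)
  show ?case
  proof (intro allI impI)
    fix b assume a: "a \<in> I" and sub: "insert x F \<subseteq> {..<n}" and out: "\<forall>i. i \<notin> insert x F \<longrightarrow> b i = a i"
      and le: "\<forall>i\<in>insert x F. i \<in> A \<or> a i \<le> b i"
    have "b(x := a x) \<in> I"
      using insert.IH a sub out le by (auto)
    then have "(b(x := a x))(x := b x) \<in> I"
      using mi_move[OF mi, of "b(x := a x)" x "b x"] sub le by auto
    then show "b \<in> I" by simp
  qed
qed

lemma mi_upclosed:
  assumes mi: "monomial_ideal n A I" and a: "a \<in> I" and b: "b \<in> mons n A"
    and le: "\<forall>i<n. i \<notin> A \<longrightarrow> a i \<le> b i"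
  shows "b \<in> I"
proof -
  have aM: "a \<in> mons n A" using mi a by (auto simp: monomial_ideal_def)
  have H: "\<forall>b. a \<in> I \<longrightarrow> {..<n} \<subseteq> {..<n} \<longrightarrow> (\<forall>i. i \<notin> {..<n} \<longrightarrow> b i = a i) \<longrightarrow> (\<forall>i\<in>{..<n}. i \<in> A \<or> a i \<le> b i) \<longrightarrow> b \<in> I"
    by (rule mi_upclosed_aux[OF mi]) simp
  have "\<forall>i. i \<notin> {..<n} \<longrightarrow> b i = a i" using b aM by (auto simp: mons_def)
  moreover have "\<forall>i\<in>{..<n}. i \<in> A \<or> a i \<le> b i" using le by auto
  ultimately show ?thesis using H a by blast
qed

definition upc :: "nat set \<Rightarrow> (nat \<Rightarrow> int) set \<Rightarrow> bool" where
  "upc T U \<longleftrightarrow> (\<forall>a\<in>U. \<forall>b. (\<forall>i. i \<notin> T \<longrightarrow> b i = a i) \<and> (\<forall>i\<in>T. a i \<le> b i) \<longrightarrow> b \<in> U)"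

definition clamp :: "nat set \<Rightarrow> (nat \<Rightarrow> int) \<Rightarrow> (nat \<Rightarrow> int) \<Rightarrow> (nat \<Rightarrow> int)" where
  "clamp T g a = (\<lambda>i. if i \<in> T then min (a i) (g i) else a i)"

lemma upc_mono: "upc (insert t T) U \<Longrightarrow> upc T U"
  unfolding upc_def by (metis insert_iff order_refl)

lemma dickson:
  assumes "finite T"
  shows "\<forall>U. upc T U \<longrightarrow> (\<exists>g. (\<forall>i. 0 \<le> g i) \<and>
     (\<forall>a\<in>U. (\<forall>i. i \<notin> T \<longrightarrow> a i = 0) \<longrightarrow> (\<forall>i\<in>T. 0 \<le> a i) \<longrightarrow> clamp T g a \<in> U))"
  using assms
proof (induction T rule: finite_induct)
  case empty
  show ?case
    apply (auto simp: clamp_def intro!: exI[of _ "\<lambda>i. 0"])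
    apply (subgoal_tac "a = (\<lambda>_. 0)")
     apply simp
    apply (rule ext)
    apply simp
    done
next
  case (insert t T)
  show ?case
  proof (intro allI impI)
    fix U assume U: "upc (insert t T) U"
    define V where "V = {a. \<exists>k\<ge>0. a(t := k) \<in> U}"
    have "upc T V" unfolding upc_def V_def
    proof (intro ballI allI impI)
      fix a b assume a: "a \<in> {a. \<exists>k\<ge>0. a(t := k) \<in> U}"
        and ab: "(\<forall>i. i \<notin> T \<longrightarrow> b i = a i) \<and> (\<forall>i\<in>T. a i \<le> b i)"
      from a obtain k where k: "k \<ge> 0" "a(t := k) \<in> U" by auto
      have H: "\<forall>b'. (\<forall>i. i \<notin> insert t T \<longrightarrow> b' i = (a(t:=k)) i) \<and> (\<forall>i\<in>insert t T. (a(t:=k)) i \<le> b' i) \<longrightarrow> b' \<in> U"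
        using U k(2) unfolding upc_def by blast
      have "(\<forall>i. i \<notin> insert t T \<longrightarrow> (b(t := k)) i = (a(t:=k)) i) \<and> (\<forall>i\<in>insert t T. (a(t:=k)) i \<le> (b(t := k)) i)"
        using ab insert.hyps(2) by auto
      then have "b(t := k) \<in> U" using H by blast
      then show "b \<in> {a. \<exists>k\<ge>0. a(t := k) \<in> U}" using k by auto
    qed
    then obtain g' where g'0: "\<forall>i. 0 \<le> g' i" and
      g': "\<forall>a\<in>V. (\<forall>i. i \<notin> T \<longrightarrow> a i = 0) \<longrightarrow> (\<forall>i\<in>T. 0 \<le> a i) \<longrightarrow> clamp T g' a \<in> V"
      using insert.IH by blast
    define X where "X = {x :: nat \<Rightarrow> int. (\<forall>i. i \<notin> T \<longrightarrow> x i = 0) \<and> (\<forall>i\<in>T. 0 \<le> x i \<and> x i \<le> g' i)}"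
    have finX: "finite X" unfolding X_def by (rule box_finite[OF insert.hyps(1)])
    define kx where "kx x = (SOME k. k \<ge> 0 \<and> x(t := k) \<in> U)" for x
    have kx: "kx x \<ge> 0 \<and> x(t := kx x) \<in> U" if "x \<in> V" for x
    proof -
      have "\<exists>k. k \<ge> 0 \<and> x(t := k) \<in> U" using that by (simp add: V_def)
      then show ?thesis unfolding kx_def by (rule someI_ex)
    qed
    define K where "K = Max (insert 0 (kx ` (X \<inter> V)))"
    have finK: "finite (insert 0 (kx ` (X \<inter> V)))" using finX by auto
    have K0: "K \<ge> 0" unfolding K_def using finK by auto
    have Kx: "kx x \<le> K" if "x \<in> X" "x \<in> V" for x
      unfolding K_def using finK that by auto
    have "\<forall>k\<in>{0..K}. \<exists>g. (\<forall>i. 0 \<le> g i) \<and>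
      (\<forall>a\<in>{a. a(t := k) \<in> U}. (\<forall>i. i \<notin> T \<longrightarrow> a i = 0) \<longrightarrow> (\<forall>i\<in>T. 0 \<le> a i) \<longrightarrow> clamp T g a \<in> {a. a(t := k) \<in> U})"
    proof
      fix k assume "k \<in> {0..K}"
      have "upc T {a. a(t := k) \<in> U}" unfolding upc_def
      proof (intro ballI allI impI)
        fix a b assume a: "a \<in> {a. a(t := k) \<in> U}"
          and ab: "(\<forall>i. i \<notin> T \<longrightarrow> b i = a i) \<and> (\<forall>i\<in>T. a i \<le> b i)"
        have H: "\<forall>b'. (\<forall>i. i \<notin> insert t T \<longrightarrow> b' i = (a(t:=k)) i) \<and> (\<forall>i\<in>insert t T. (a(t:=k)) i \<le> b' i) \<longrightarrow> b' \<in> U"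
          using U a unfolding upc_def by blast
        have "(\<forall>i. i \<notin> insert t T \<longrightarrow> (b(t := k)) i = (a(t:=k)) i) \<and> (\<forall>i\<in>insert t T. (a(t:=k)) i \<le> (b(t := k)) i)"
          using ab insert.hyps(2) by auto
        then have "b(t := k) \<in> U" using H by blast
        then show "b \<in> {a. a(t := k) \<in> U}" by auto
      qed
      then show "\<exists>g. (\<forall>i. 0 \<le> g i) \<and>
      (\<forall>a\<in>{a. a(t := k) \<in> U}. (\<forall>i. i \<notin> T \<longrightarrow> a i = 0) \<longrightarrow> (\<forall>i\<in>T. 0 \<le> a i) \<longrightarrow> clamp T g a \<in> {a. a(t := k) \<in> U})"
        using insert.IH by blast
    qed
    from bchoice[OF this] obtain gk where gkA: "\<forall>k\<in>{0..K}. (\<forall>i. 0 \<le> gk k i) \<and>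
      (\<forall>a\<in>{a. a(t := k) \<in> U}. (\<forall>i. i \<notin> T \<longrightarrow> a i = 0) \<longrightarrow> (\<forall>i\<in>T. 0 \<le> a i) \<longrightarrow> clamp T (gk k) a \<in> {a. a(t := k) \<in> U})"
      by blast
    then have
      gk: "\<forall>k\<in>{0..K}. \<forall>a\<in>{a. a(t := k) \<in> U}. (\<forall>i. i \<notin> T \<longrightarrow> a i = 0) \<longrightarrow> (\<forall>i\<in>T. 0 \<le> a i) \<longrightarrow> clamp T (gk k) a \<in> {a. a(t := k) \<in> U}"
      by blast
    define G where "G i = (if i = t then K else Max (insert (g' i) ((\<lambda>k. gk k i) ` {0..K})))" for i
    have finG: "finite (insert (g' i) ((\<lambda>k. gk k i) ` {0..K}))" for i by auto
    have Geq: "G i = Max (insert (g' i) ((\<lambda>k. gk k i) ` {0..K}))" if "i \<noteq> t" for i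
      using that by (simp add: G_def)
    have G1: "g' i \<le> G i" if "i \<noteq> t" for i
      using Max_ge[OF finG, of "g' i" i] Geq[OF that] by simp
    have G2: "gk k i \<le> G i" if "i \<noteq> t" "k \<in> {0..K}" for i k
    proof -
      have "gk k i \<in> insert (g' i) ((\<lambda>k. gk k i) ` {0..K})" using that(2) by blast
      from Max_ge[OF finG this] show ?thesis using Geq[OF that(1)] by simp
    qed
    have G0: "\<forall>i. 0 \<le> G i"
    proof
      fix i show "0 \<le> G i"
      proof (cases "i = t")
        case True then show ?thesis using K0 by (simp add: G_def)
      next
        case False then show ?thesis using G1[OF False] g'0 by (meson order_trans)
      qed
    qed
    show "\<exists>g. (\<forall>i. 0 \<le> g i) \<and> (\<forall>a\<in>U. (\<forall>i. i \<notin> insert t T \<longrightarrow> a i = 0) \<longrightarrow>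
        (\<forall>i\<in>insert t T. 0 \<le> a i) \<longrightarrow> clamp (insert t T) g a \<in> U)"
    proof (intro exI[of _ G] conjI G0 ballI impI)
      fix a assume aU: "a \<in> U" and supp: "\<forall>i. i \<notin> insert t T \<longrightarrow> a i = 0"
        and nn: "\<forall>i\<in>insert t T. 0 \<le> a i"
      define x where "x = a(t := 0)"
      have xV: "x \<in> V" unfolding V_def x_def using aU nn by (auto intro!: exI[of _ "a t"])
      have xs: "\<forall>i. i \<notin> T \<longrightarrow> x i = 0" using supp unfolding x_def by auto
      have xn: "\<forall>i\<in>T. 0 \<le> x i" using nn unfolding x_def by auto
      define y where "y = clamp T g' x"
      have yV: "y \<in> V" using g' xV xs xn unfolding y_def by blast
      have yX: "y \<in> X" unfolding X_def y_def clamp_def using xs xn g'0 by auto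
      have ky: "kx y \<ge> 0" "y(t := kx y) \<in> U" using kx[OF yV] by auto
      have kyK: "kx y \<le> K" using Kx yX yV by auto
      show "clamp (insert t T) G a \<in> U"
      proof (cases "K \<le> a t")
        case True
        have "\<forall>i. i \<notin> insert t T \<longrightarrow> clamp (insert t T) G a i = (y(t := kx y)) i"
          using xs unfolding clamp_def y_def by (auto simp: clamp_def x_def)
        moreover have "\<forall>i\<in>insert t T. (y(t := kx y)) i \<le> clamp (insert t T) G a i"
        proof
          fix i assume i: "i \<in> insert t T"
          show "(y(t := kx y)) i \<le> clamp (insert t T) G a i"
          proof (cases "i = t")
            case True then show ?thesis using kyK \<open>K \<le> a t\<close> by (simp add: clamp_def G_def)
          next
            case False
            then have "i \<in> T" using i by auto
            then show ?thesis using False G1[OF False] by (auto simp: clamp_def y_def x_def)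
          qed
        qed
        ultimately show ?thesis using U ky(2) unfolding upc_def by blast
      next
        case False
        define k where "k = a t"
        have kK: "k \<in> {0..K}" using False nn unfolding k_def by auto
        have "x(t := k) = a" unfolding x_def k_def by auto
        then have xk: "x \<in> {a. a(t := k) \<in> U}" using aU by auto
        have z: "(clamp T (gk k) x)(t := k) \<in> U" using gk kK xk xs xn by blast
        have "\<forall>i. i \<notin> insert t T \<longrightarrow> clamp (insert t T) G a i = ((clamp T (gk k) x)(t := k)) i"
          unfolding clamp_def x_def by auto
        moreover have "\<forall>i\<in>insert t T. ((clamp T (gk k) x)(t := k)) i \<le> clamp (insert t T) G a i"
        proof
          fix i assume i: "i \<in> insert t T"
          show "((clamp T (gk k) x)(t := k)) i \<le> clamp (insert t T) G a i"
          proof (cases "i = t")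
            case True then show ?thesis using False by (simp add: clamp_def G_def k_def)
          next
            case False
            then have "i \<in> T" using i by auto
            then show ?thesis using False G2[OF False kK] by (auto simp: clamp_def x_def)
          qed
        qed
        ultimately show ?thesis using U z unfolding upc_def by blast
      qed
    qed
  qed
qed

definition cl :: "nat \<Rightarrow> nat set \<Rightarrow> (nat \<Rightarrow> int) \<Rightarrow> (nat \<Rightarrow> int) \<Rightarrow> (nat \<Rightarrow> int)" where
  "cl n A g c = (\<lambda>i. if i \<in> A then (if 0 \<le> c i then 0 else -1) else if i < n then min (c i) (g i) else c i)"

lemma cl_mons:
  assumes "A \<subseteq> {..<n}" "\<forall>i. 0 \<le> g i" "c \<in> mons n A"
  shows "cl n A g c \<in> mons n A"
  using assms unfolding mons_def cl_def by auto

lemma cl_iff: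
  assumes mi: "monomial_ideal n A X" and An: "A \<subseteq> {..<n}"
    and hg: "\<forall>a\<in>X. (\<forall>i. i \<notin> ({..<n} - A) \<longrightarrow> a i = 0) \<longrightarrow> (\<forall>i\<in>{..<n} - A. 0 \<le> a i) \<longrightarrow> clamp ({..<n} - A) gX a \<in> X"
    and gle: "\<forall>i. gX i \<le> g i" and g0: "\<forall>i. 0 \<le> g i" and c: "c \<in> mons n A"
  shows "c \<in> X \<longleftrightarrow> cl n A g c \<in> X"
proof
  assume cX: "c \<in> X"
  define z where "z = (\<lambda>i. if i \<in> A then 0 else c i)"
  have zM: "z \<in> mons n A" using c unfolding z_def mons_def by auto
  have zX: "z \<in> X" by (rule mi_upclosed[OF mi cX zM]) (auto simp: z_def)
  have "clamp ({..<n} - A) gX z \<in> X"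
    using hg zX c An unfolding z_def mons_def by auto
  moreover have "cl n A g c \<in> mons n A" by (rule cl_mons[OF An g0 c])
  ultimately show "cl n A g c \<in> X"
  proof (rule mi_upclosed[OF mi])
    show "\<forall>i<n. i \<notin> A \<longrightarrow> clamp ({..<n} - A) gX z i \<le> cl n A g c i"
    proof (intro allI impI)
      fix i assume "i < n" "i \<notin> A"
      then show "clamp ({..<n} - A) gX z i \<le> cl n A g c i"
        using gle[rule_format, of i] by (auto simp: clamp_def cl_def z_def min_def)
    qed
  qed
next
  assume "cl n A g c \<in> X"
  then show "c \<in> X" by (rule mi_upclosed[OF mi _ c]) (auto simp: cl_def)
qed

definition sp :: "nat \<Rightarrow> nat set \<Rightarrow> (nat \<Rightarrow> int) \<Rightarrow> (nat \<Rightarrow> int) \<Rightarrow> (nat \<Rightarrow> int) \<times> nat set \<times> nat set" where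
  "sp n A g a = (a, {i. i < n \<and> (if i \<in> A then a i = 0 else a i = g i)}, {i\<in>A. a i = -1})"

lemma space_sp:
  assumes An: "A \<subseteq> {..<n}" and g0: "\<forall>i. 0 \<le> g i" and aM: "a \<in> mons n A" and fix_a: "cl n A g a = a"
  shows "space (sp n A g a) = {c \<in> mons n A. cl n A g c = a}"
proof -
  have fa: "\<forall>i. cl n A g a i = a i" using fix_a by simp
  show ?thesis
  proof (intro set_eqI iffI)
    fix c assume "c \<in> space (sp n A g a)"
    then have H: "\<forall>i. i \<notin> {i. i < n \<and> (if i \<in> A then a i = 0 else a i = g i)} \<union> {i\<in>A. a i = -1} \<longrightarrow> c i = a i"
      "\<forall>i\<in>{i. i < n \<and> (if i \<in> A then a i = 0 else a i = g i)}. a i \<le> c i"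
      "\<forall>i\<in>{i\<in>A. a i = -1}. c i \<le> a i"
      unfolding sp_def mem_space by auto
    have "c \<in> mons n A" unfolding mons_def
    proof (intro CollectI conjI allI impI)
      fix i assume "n \<le> i" then show "c i = 0" using H(1) An aM by (auto simp: mons_def)
    next
      fix i assume i: "i < n" "i \<notin> A"
      have a0: "0 \<le> a i" using aM i by (simp add: mons_def)
      have h1: "a i \<noteq> g i \<Longrightarrow> c i = a i" using H(1)[rule_format, of i] i by auto
      have h2: "a i = g i \<Longrightarrow> g i \<le> c i" using H(2)[rule_format, of i] i by auto
      show "0 \<le> c i" using a0 h1 h2 by (cases "a i = g i") auto
    qed
    moreover have "cl n A g c = a"
    proof
      fix i show "cl n A g c i = a i"
        using H(1)[rule_format, of i] H(2)[rule_format, of i] H(3)[rule_format, of i] aM An g0 fa[rule_format, of i] by (cases "a i = g i"; auto simp: mons_def cl_def split: if_splits)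
    qed
    ultimately show "c \<in> {c \<in> mons n A. cl n A g c = a}" by simp
  next
    fix c assume "c \<in> {c \<in> mons n A. cl n A g c = a}"
    then have cM: "c \<in> mons n A" and fc: "\<forall>i. cl n A g c i = a i" by auto
    show "c \<in> space (sp n A g a)" unfolding sp_def mem_space
    proof (intro conjI allI ballI impI)
      fix i assume "i \<notin> {i. i < n \<and> (if i \<in> A then a i = 0 else a i = g i)} \<union> {i\<in>A. a i = -1}"
      then show "c i = a i" using fc[rule_format, of i] cM An
        by (auto simp: mons_def cl_def split: if_splits)
    next
      fix i assume "i \<in> {i. i < n \<and> (if i \<in> A then a i = 0 else a i = g i)}"
      then show "a i \<le> c i" using fc[rule_format, of i] by (auto simp: cl_def split: if_splits)
    next
      fix i assume "i \<in> {i\<in>A. a i = -1}"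
      then show "c i \<le> a i" using fc[rule_format, of i] by (auto simp: cl_def split: if_splits)
    qed
  qed
qed

lemma mi_upc:
  assumes mi: "monomial_ideal n A X" and An: "A \<subseteq> {..<n}"
  shows "upc ({..<n} - A) X"
  unfolding upc_def
proof (intro ballI allI impI)
  fix a b assume a: "a \<in> X" and ab: "(\<forall>i. i \<notin> {..<n} - A \<longrightarrow> b i = a i) \<and> (\<forall>i\<in>{..<n} - A. a i \<le> b i)"
  have aM: "a \<in> mons n A" using mi a by (auto simp: monomial_ideal_def)
  have bM: "b \<in> mons n A" unfolding mons_def
  proof (intro CollectI conjI allI impI)
    fix i assume "n \<le> i" then show "b i = 0" using ab aM by (auto simp: mons_def)
  next
    fix i assume i: "i < n" "i \<notin> A"
    have "a i \<le> b i" using ab i by auto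
    moreover have "0 \<le> a i" using aM i by (simp add: mons_def)
    ultimately show "0 \<le> b i" by linarith
  qed
  show "b \<in> X" by (rule mi_upclosed[OF mi a bM]) (use ab in auto)
qed

lemma cl_idem: "\<forall>i. 0 \<le> g i \<Longrightarrow> cl n A g (cl n A g c) = cl n A g c"
  by (auto simp: cl_def fun_eq_iff min_def)

lemma exists_decomp:
  assumes An: "A \<subseteq> {..<n}" and miI: "monomial_ideal n A I" and miJ: "monomial_ideal n A J"
  shows "\<exists>D. stanley_decomp n A I J D"
proof -
  have finT: "finite ({..<n} - A)" by simp
  obtain gI where gI0: "\<forall>i. 0 \<le> gI i" and hgI: "\<forall>a\<in>I. (\<forall>i. i \<notin> ({..<n} - A) \<longrightarrow> a i = 0) \<longrightarrow> (\<forall>i\<in>{..<n} - A. 0 \<le> a i) \<longrightarrow> clamp ({..<n} - A) gI a \<in> I"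
    using dickson[OF finT] mi_upc[OF miI An] by blast
  obtain gJ where gJ0: "\<forall>i. 0 \<le> gJ i" and hgJ: "\<forall>a\<in>J. (\<forall>i. i \<notin> ({..<n} - A) \<longrightarrow> a i = 0) \<longrightarrow> (\<forall>i\<in>{..<n} - A. 0 \<le> a i) \<longrightarrow> clamp ({..<n} - A) gJ a \<in> J"
    using dickson[OF finT] mi_upc[OF miJ An] by blast
  define g where "g i = max (gI i) (gJ i)" for i
  have g0: "\<forall>i. 0 \<le> g i" using gI0 unfolding g_def by (meson max.coboundedI1)
  have clI: "c \<in> I \<longleftrightarrow> cl n A g c \<in> I" if "c \<in> mons n A" for c
    by (rule cl_iff[OF miI An hgI _ g0 that]) (simp add: g_def)
  have clJ: "c \<in> J \<longleftrightarrow> cl n A g c \<in> J" if "c \<in> mons n A" for c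
    by (rule cl_iff[OF miJ An hgJ _ g0 that]) (simp add: g_def)
  have IM: "I \<subseteq> mons n A" using miI by (simp add: monomial_ideal_def)
  define B where "B = {a \<in> I - J. cl n A g a = a}"
  define D where "D = sp n A g ` B"
  have spB: "space (sp n A g a) = {c \<in> mons n A. cl n A g c = a}" if "a \<in> B" for a
    using that IM by (intro space_sp[OF An g0]) (auto simp: B_def)
  have spIJ: "space (sp n A g a) \<subseteq> I - J" if "a \<in> B" for a
  proof
    fix c assume "c \<in> space (sp n A g a)"
    then have c: "c \<in> mons n A" "cl n A g c = a" using spB[OF that] by auto
    then show "c \<in> I - J" using clI[OF c(1)] clJ[OF c(1)] that by (auto simp: B_def)
  qed
  have "B \<subseteq> {x :: nat \<Rightarrow> int. (\<forall>i. i \<notin> {..<n} \<longrightarrow> x i = 0) \<and> (\<forall>i\<in>{..<n}. -1 \<le> x i \<and> x i \<le> g i)}"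
  proof
    fix a assume aB: "a \<in> B"
    then have aM: "a \<in> mons n A" and fa: "\<forall>i. cl n A g a i = a i" using IM by (auto simp: B_def)
    show "a \<in> {x :: nat \<Rightarrow> int. (\<forall>i. i \<notin> {..<n} \<longrightarrow> x i = 0) \<and> (\<forall>i\<in>{..<n}. -1 \<le> x i \<and> x i \<le> g i)}"
    proof (intro CollectI conjI allI ballI impI)
      fix i assume "i \<notin> {..<n}" then show "a i = 0" using aM by (simp add: mons_def)
    next
      fix i assume i: "i \<in> {..<n}"
      show "-1 \<le> a i" using fa[rule_format, of i] aM i g0[rule_format, of i]
        by (auto simp: cl_def mons_def split: if_splits)
      show "a i \<le> g i" using fa[rule_format, of i] aM i g0[rule_format, of i]
        by (auto simp: cl_def mons_def split: if_splits)
    qed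
  qed
  then have finB: "finite B" using box_finite[of "{..<n}" "\<lambda>_. -1" g] finite_subset by blast
  have "stanley_decomp n A I J D"
    unfolding stanley_decomp_def
  proof (intro conjI ballI impI)
    show "finite D" unfolding D_def using finB by simp
  next
    fix s assume "s \<in> D"
    then obtain a where a: "a \<in> B" "s = sp n A g a" unfolding D_def by auto
    show "stanley_space n A I J s" unfolding a(2) sp_def stanley_space_iff
      using spIJ[OF a(1)] An by (auto simp: sp_def)
  next
    fix s s' assume s: "s \<in> D" and s': "s' \<in> D" and ne: "s \<noteq> s'"
    obtain a where a: "a \<in> B" "s = sp n A g a" using s unfolding D_def by auto
    obtain a' where a': "a' \<in> B" "s' = sp n A g a'" using s' unfolding D_def by auto
    have "a \<noteq> a'" using ne a a' by auto
    then show "space s \<inter> space s' = {}" using spB[OF a(1)] spB[OF a'(1)] a(2) a'(2) by auto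
  next
    show "(\<Union>s\<in>D. space s) = I - J"
    proof
      show "(\<Union>s\<in>D. space s) \<subseteq> I - J" unfolding D_def using spIJ by auto
    next
      show "I - J \<subseteq> (\<Union>s\<in>D. space s)"
      proof
        fix c assume c: "c \<in> I - J"
        then have cM: "c \<in> mons n A" using IM by auto
        define a where "a = cl n A g c"
        have aB: "a \<in> B" unfolding B_def a_def using c clI[OF cM] clJ[OF cM] cl_idem[OF g0] by auto
        have "c \<in> space (sp n A g a)" using spB[OF aB] cM a_def by auto
        then show "c \<in> (\<Union>s\<in>D. space s)" unfolding D_def using aB by auto
      qed
    qed
  qed
  then show ?thesis by blast
qed

lemma space_lift1:
  assumes "u n = 0" "n \<notin> Zp" "n \<notin> Zn"
  shows "c \<in> space (u, insert n Zp, Zn) \<longleftrightarrow> c(n := 0) \<in> space (u, Zp, Zn) \<and> 0 \<le> c n"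
  using assms unfolding mem_space by (auto split: if_splits)

lemma space_lift2:
  assumes "u n = 0" "n \<notin> Zp" "n \<notin> Zn"
  shows "c \<in> space (u(n := -1), Zp, insert n Zn) \<longleftrightarrow> c(n := 0) \<in> space (u, Zp, Zn) \<and> c n < 0"
  using assms unfolding mem_space by (auto split: if_splits)

lemma space_slice:
  assumes "c0 \<in> space (u, Zp, Zn)" "c0 n = 0"
  shows "space (u(n := 0), Zp - {n}, Zn - {n}) = {c \<in> space (u, Zp, Zn). c n = 0}"
proof (rule set_eqI)
  fix c
  have h: "(\<forall>i. i \<notin> Zp \<union> Zn \<longrightarrow> c0 i = u i) \<and> (\<forall>i\<in>Zp. u i \<le> c0 i) \<and> (\<forall>i\<in>Zn. c0 i \<le> u i)"
    using assms(1) unfolding mem_space .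
  show "c \<in> space (u(n := 0), Zp - {n}, Zn - {n}) \<longleftrightarrow> c \<in> {c \<in> space (u, Zp, Zn). c n = 0}"
    unfolding mem_Collect_eq mem_space
  proof (intro iffI)
    assume HH: "(\<forall>i. i \<notin> (Zp - {n}) \<union> (Zn - {n}) \<longrightarrow> c i = (u(n := 0)) i) \<and>
      (\<forall>i\<in>Zp - {n}. (u(n := 0)) i \<le> c i) \<and> (\<forall>i\<in>Zn - {n}. c i \<le> (u(n := 0)) i)"
    then have H: "\<forall>i. i \<notin> (Zp - {n}) \<union> (Zn - {n}) \<longrightarrow> c i = (u(n := 0)) i"
      "\<forall>i\<in>Zp - {n}. (u(n := 0)) i \<le> c i" "\<forall>i\<in>Zn - {n}. c i \<le> (u(n := 0)) i" by auto
    have cn: "c n = 0" using H(1) by auto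
    have "\<forall>i. i \<notin> Zp \<union> Zn \<longrightarrow> c i = u i"
    proof (intro allI impI)
      fix i assume i: "i \<notin> Zp \<union> Zn"
      show "c i = u i"
      proof (cases "i = n")
        case True then show ?thesis using cn h i assms(2) by auto
      next
        case False then show ?thesis using H(1) i by auto
      qed
    qed
    moreover have "\<forall>i\<in>Zp. u i \<le> c i"
    proof
      fix i assume i: "i \<in> Zp"
      show "u i \<le> c i"
      proof (cases "i = n")
        case True then show ?thesis using cn h i assms(2) by auto
      next
        case False then show ?thesis using H(2) i by auto
      qed
    qed
    moreover have "\<forall>i\<in>Zn. c i \<le> u i"
    proof
      fix i assume i: "i \<in> Zn"
      show "c i \<le> u i"
      proof (cases "i = n")
        case True then show ?thesis using cn h i assms(2) by auto
      next
        case False then show ?thesis using H(3) i by auto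
      qed
    qed
    ultimately show "((\<forall>i. i \<notin> Zp \<union> Zn \<longrightarrow> c i = u i) \<and> (\<forall>i\<in>Zp. u i \<le> c i) \<and> (\<forall>i\<in>Zn. c i \<le> u i)) \<and> c n = 0"
      using cn by blast
  next
    assume HH: "((\<forall>i. i \<notin> Zp \<union> Zn \<longrightarrow> c i = u i) \<and> (\<forall>i\<in>Zp. u i \<le> c i) \<and> (\<forall>i\<in>Zn. c i \<le> u i)) \<and> c n = 0"
    then have H: "\<forall>i. i \<notin> Zp \<union> Zn \<longrightarrow> c i = u i" "\<forall>i\<in>Zp. u i \<le> c i" "\<forall>i\<in>Zn. c i \<le> u i" "c n = 0" by auto
    have "\<forall>i. i \<notin> (Zp - {n}) \<union> (Zn - {n}) \<longrightarrow> c i = (u(n := 0)) i"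
      using H(1,4) by auto
    moreover have "\<forall>i\<in>Zp - {n}. (u(n := 0)) i \<le> c i" using H(2) by auto
    moreover have "\<forall>i\<in>Zn - {n}. c i \<le> (u(n := 0)) i" using H(3) by auto
    ultimately show "(\<forall>i. i \<notin> (Zp - {n}) \<union> (Zn - {n}) \<longrightarrow> c i = (u(n := 0)) i) \<and>
      (\<forall>i\<in>Zp - {n}. (u(n := 0)) i \<le> c i) \<and> (\<forall>i\<in>Zn - {n}. c i \<le> (u(n := 0)) i)" by blast
  qed
qed

lemma ext_poly_iff:
  assumes "X \<subseteq> mons n A"
  shows "c \<in> ext_poly n X \<longleftrightarrow> c(n := 0) \<in> X \<and> 0 \<le> c n"
proof -
  have e: "(\<lambda>i. if i = n then 0 else c i) = c(n := 0)" by (simp add: fun_eq_iff)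
  have mem: "c \<in> ext_poly n X \<longleftrightarrow> (\<lambda>i. if i = n then 0 else c i) \<in> X \<and> 0 \<le> c n \<and> (\<forall>i>n. c i = 0)"
    unfolding ext_poly_def by (rule mem_Collect_eq)
  show ?thesis
  proof
    assume "c \<in> ext_poly n X" then show "c(n := 0) \<in> X \<and> 0 \<le> c n" unfolding mem e by blast
  next
    assume h: "c(n := 0) \<in> X \<and> 0 \<le> c n"
    have "\<forall>i>n. c i = 0"
    proof (intro allI impI)
      fix i assume "n < i"
      moreover have M: "c(n := 0) \<in> mons n A" using h assms by auto
      ultimately have "(c(n := 0)) i = 0"
        using conjunct1[OF M[unfolded mons_def mem_Collect_eq], rule_format, of i] by simp
      then show "c i = 0" using \<open>n < i\<close> by simp
    qed
    then show "c \<in> ext_poly n X" unfolding mem e using h by blast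
  qed
qed

lemma ext_laurent1_iff:
  assumes "X \<subseteq> mons n A"
  shows "c \<in> ext_laurent n 1 X \<longleftrightarrow> c(n := 0) \<in> X"
proof -
  have mem: "c \<in> ext_laurent n 1 X \<longleftrightarrow> (\<lambda>i. if i < n then c i else 0) \<in> X \<and> (\<forall>i. n + 1 \<le> i \<longrightarrow> c i = 0)"
    unfolding ext_laurent_def by (rule mem_Collect_eq)
  show ?thesis
  proof
    assume h: "c \<in> ext_laurent n 1 X"
    then have z: "\<forall>i. n + 1 \<le> i \<longrightarrow> c i = 0" unfolding mem by blast
    have "(\<lambda>i. if i < n then c i else 0) = c(n := 0)"
    proof
      fix i show "(if i < n then c i else 0) = (c(n := 0)) i" using z[rule_format, of i] by auto
    qed
    then show "c(n := 0) \<in> X" using h unfolding mem by simp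
  next
    assume h: "c(n := 0) \<in> X"
    have z: "\<forall>i. n + 1 \<le> i \<longrightarrow> c i = 0"
    proof (intro allI impI)
      fix i assume "n + 1 \<le> i"
      moreover have M: "c(n := 0) \<in> mons n A" using h assms by auto
      ultimately have "(c(n := 0)) i = 0"
        using conjunct1[OF M[unfolded mons_def mem_Collect_eq], rule_format, of i] by simp
      then show "c i = 0" using \<open>n + 1 \<le> i\<close> by simp
    qed
    have "(\<lambda>i. if i < n then c i else 0) = c(n := 0)"
    proof
      fix i show "(if i < n then c i else 0) = (c(n := 0)) i" using z[rule_format, of i] by auto
    qed
    then show "c \<in> ext_laurent n 1 X" unfolding mem using h z by simp
  qed
qed

lemma decomp_min_bound:
  assumes D: "stanley_decomp n A I J D" and An: "A \<subseteq> {..<n}" and ne: "I - J \<noteq> {}"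
  shows "D \<noteq> {}" "Min (sdim ` D) \<le> 2 * n"
proof -
  show Dne: "D \<noteq> {}" using D ne by (auto simp: stanley_decomp_def)
  have fin: "finite D" using D by (simp add: stanley_decomp_def)
  have "Min (sdim ` D) \<in> sdim ` D" using fin Dne by (intro Min_in) auto
  then obtain s where s: "s \<in> D" "Min (sdim ` D) = sdim s" by auto
  obtain u Zp Zn where su: "s = (u, Zp, Zn)" by (cases s)
  have "stanley_space n A I J (u, Zp, Zn)" using D s su by (auto simp: stanley_decomp_def)
  then have "Zp \<subseteq> {..<n}" "Zn \<subseteq> {..<n}" using An by (auto simp: stanley_space_iff)
  then have "card Zp \<le> n" "card Zn \<le> n" by (metis card_lessThan card_mono finite_lessThan)+
  then show "Min (sdim ` D) \<le> 2 * n" using s su by simp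
qed

lemma sdepth_transfer:
  assumes An: "A \<subseteq> {..<n}" and An': "A' \<subseteq> {..<n'}" and ne: "I - J \<noteq> {}" and ne': "I' - J' \<noteq> {}"
    and ex: "\<exists>D. stanley_decomp n A I J D"
    and up: "\<And>D. stanley_decomp n A I J D \<Longrightarrow> \<exists>D'. stanley_decomp n' A' I' J' D' \<and> Min (sdim ` D) + 1 \<le> Min (sdim ` D')"
    and down: "\<And>D'. stanley_decomp n' A' I' J' D' \<Longrightarrow> \<exists>D. stanley_decomp n A I J D \<and> Min (sdim ` D') \<le> Min (sdim ` D) + 1"
  shows "sdepth n' A' I' J' = sdepth n A I J + 1"
proof -
  define S where "S = {Min (sdim ` D) | D. stanley_decomp n A I J D}"
  define S' where "S' = {Min (sdim ` D) | D. stanley_decomp n' A' I' J' D}"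
  have finS: "finite S" unfolding S_def
    by (rule finite_subset[of _ "{..2*n}"]) (use decomp_min_bound[OF _ An ne] in auto)
  have finS': "finite S'" unfolding S'_def
    by (rule finite_subset[of _ "{..2*n'}"]) (use decomp_min_bound[OF _ An' ne'] in auto)
  have neS: "S \<noteq> {}" using ex unfolding S_def by auto
  have MS: "Max S \<in> S" using finS neS by (rule Max_in)
  then obtain D where D: "stanley_decomp n A I J D" "Max S = Min (sdim ` D)" unfolding S_def by auto
  obtain D' where D': "stanley_decomp n' A' I' J' D'" "Min (sdim ` D) + 1 \<le> Min (sdim ` D')" using up[OF D(1)] by blast
  have "Min (sdim ` D') \<in> S'" using D' unfolding S'_def by auto
  then have neS': "S' \<noteq> {}" and "Max S + 1 \<le> Max S'" using D(2) D'(2) Max_ge[OF finS'] by (auto intro: order_trans)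
  have "Max S' \<in> S'" using finS' neS' by (rule Max_in)
  then obtain E' where E': "stanley_decomp n' A' I' J' E'" "Max S' = Min (sdim ` E')" unfolding S'_def by auto
  obtain E where E: "stanley_decomp n A I J E" "Min (sdim ` E') \<le> Min (sdim ` E) + 1" using down[OF E'(1)] by blast
  have "Min (sdim ` E) \<in> S" using E unfolding S_def by auto
  then have "Max S' \<le> Max S + 1" using E'(2) E(2) Max_ge[OF finS] by (auto intro: order_trans)
  then have "Max S' = Max S + 1" using \<open>Max S + 1 \<le> Max S'\<close> by simp
  then show ?thesis unfolding sdepth_def S_def S'_def .
qed

lemma card_le_diff1:
  assumes "finite Z"
  shows "card Z \<le> card (Z - {n}) + 1"
proof -
  have "card Z \<le> card (insert n (Z - {n}))" using assms by (intro card_mono) auto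
  also have "\<dots> = card (Z - {n}) + 1"
    using assms by (metis card_insert_disjoint finite_Diff Diff_iff insertI1 Suc_eq_plus1)
  finally show ?thesis .
qed

lemma card_pm:
  assumes "finite Zp" "finite Zn" "Zp \<inter> Zn = {}"
  shows "card Zp + card Zn \<le> card (Zp - {n}) + card (Zn - {n}) + 1"
proof (cases "n \<in> Zp")
  case True
  then have "n \<notin> Zn" using assms(3) by auto
  then show ?thesis using card_le_diff1[OF assms(1), of n] by simp
next
  case False
  then show ?thesis using card_le_diff1[OF assms(2), of n] by simp
qed

lemma restrict_decomp:
  assumes An: "A \<subseteq> {..<n}" and IM: "I \<subseteq> mons n A" and JM: "J \<subseteq> mons n A"
    and I': "\<And>c. c \<in> I' \<longleftrightarrow> c(n := 0) \<in> I \<and> c n \<in> R"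
    and J': "\<And>c. c \<in> J' \<longleftrightarrow> c(n := 0) \<in> J \<and> c n \<in> R" and R0: "0 \<in> R"
    and A': "A' \<subseteq> insert n A" and D': "stanley_decomp (Suc n) A' I' J' D'" and ne: "I - J \<noteq> {}"
  shows "\<exists>D. stanley_decomp n A I J D \<and> Min (sdim ` D') \<le> Min (sdim ` D) + 1"
proof -
  have I0: "c \<in> I' \<longleftrightarrow> c \<in> I" if "c n = 0" for c
    using I'[of c] that R0 by (simp add: fun_upd_idem)
  have J0: "c \<in> J' \<longleftrightarrow> c \<in> J" if "c n = 0" for c
    using J'[of c] that R0 by (simp add: fun_upd_idem)
  define f :: "(nat \<Rightarrow> int) \<times> nat set \<times> nat set \<Rightarrow> (nat \<Rightarrow> int) \<times> nat set \<times> nat set"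
    where "f = (\<lambda>(u, Zp, Zn). (u(n := 0), Zp - {n}, Zn - {n}))"
  define D'' where "D'' = {s \<in> D'. \<exists>c\<in>space s. c n = 0}"
  define D where "D = f ` D''"
  have finD': "finite D'" using D' by (simp add: stanley_decomp_def)
  have ss: "stanley_space (Suc n) A' I' J' s" if "s \<in> D'" for s
    using D' that by (simp add: stanley_decomp_def)
  have sl: "space (f s) = {c \<in> space s. c n = 0}" if sD: "s \<in> D''" for s
  proof -
    obtain u Zp Zn where su: "s = (u, Zp, Zn)" by (cases s)
    obtain c0 where "c0 \<in> space s" "c0 n = 0" using sD unfolding D''_def by auto
    then show ?thesis unfolding su f_def using space_slice[of c0 u Zp Zn n] su by simp
  qed
  have fsIJ: "space (f s) \<subseteq> I - J" if "s \<in> D''" for s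
  proof
    fix c assume "c \<in> space (f s)"
    then have c: "c \<in> space s" "c n = 0" using sl[OF that] by auto
    obtain u Zp Zn where su: "s = (u, Zp, Zn)" by (cases s)
    have "s \<in> D'" using that unfolding D''_def by auto
    then have "stanley_space (Suc n) A' I' J' s" by (rule ss)
    then have "space s \<subseteq> I' - J'" using su by (simp add: stanley_space_iff)
    then show "c \<in> I - J" using c I0[of c, OF c(2)] J0[of c, OF c(2)] by auto
  qed
  have fss: "stanley_space n A I J (f s)" if "s \<in> D''" for s
  proof -
    obtain u Zp Zn where su: "s = (u, Zp, Zn)" by (cases s)
    have "s \<in> D'" using that unfolding D''_def by auto
    then have "stanley_space (Suc n) A' I' J' (u, Zp, Zn)" using ss su by simp
    then have h: "Zp \<subseteq> {..<Suc n}" "Zn \<subseteq> A'" "Zp \<inter> Zn = {}" by (auto simp: stanley_space_iff)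
    have "Zp - {n} \<subseteq> {..<n}" using h(1) by auto
    moreover have "Zn - {n} \<subseteq> A" using h(2) A' by auto
    moreover have "(Zp - {n}) \<inter> (Zn - {n}) = {}" using h(3) by auto
    moreover have "space (u(n := 0), Zp - {n}, Zn - {n}) \<subseteq> I - J" using fsIJ[OF that] su by (simp add: f_def)
    ultimately show ?thesis using su by (simp add: f_def stanley_space_iff)
  qed
  have sd: "sdim s \<le> sdim (f s) + 1" if "s \<in> D'" for s
  proof -
    obtain u Zp Zn where su: "s = (u, Zp, Zn)" by (cases s)
    have "stanley_space (Suc n) A' I' J' (u, Zp, Zn)" using ss[OF that] su by simp
    then have h: "Zp \<subseteq> {..<Suc n}" "Zn \<subseteq> A'" "Zp \<inter> Zn = {}" by (auto simp: stanley_space_iff)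
    have "finite Zp" using h(1) finite_subset by blast
    moreover have "finite Zn" using h(2) A' An finite_subset[of Zn "insert n A"] finite_subset[of A "{..<n}"] by auto
    ultimately show ?thesis using card_pm[OF _ _ h(3), of n] su by (simp add: f_def)
  qed
  have dec: "stanley_decomp n A I J D"
    unfolding stanley_decomp_def
  proof (intro conjI ballI impI)
    show "finite D" unfolding D_def D''_def using finD' by simp
  next
    fix x assume "x \<in> D" then show "stanley_space n A I J x" unfolding D_def using fss by auto
  next
    fix x y assume x: "x \<in> D" and y: "y \<in> D" and xy: "x \<noteq> y"
    obtain s where s: "s \<in> D''" "x = f s" using x unfolding D_def by auto
    obtain s' where s': "s' \<in> D''" "y = f s'" using y unfolding D_def by auto
    have "s \<noteq> s'" using s s' xy by auto
    moreover have "s \<in> D'" "s' \<in> D'" using s s' unfolding D''_def by auto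
    ultimately have "space s \<inter> space s' = {}" using D' by (simp add: stanley_decomp_def)
    then show "space x \<inter> space y = {}" using sl[OF s(1)] sl[OF s'(1)] s s' by auto
  next
    show "(\<Union>x\<in>D. space x) = I - J"
    proof
      show "(\<Union>x\<in>D. space x) \<subseteq> I - J" unfolding D_def using fsIJ by auto
    next
      show "I - J \<subseteq> (\<Union>x\<in>D. space x)"
      proof
        fix c assume c: "c \<in> I - J"
        have cn: "c n = 0" using c IM An by (auto simp: mons_def)
        have "c \<in> I' - J'" using c I0[of c, OF cn] J0[of c, OF cn] by auto
        moreover have "(\<Union>s\<in>D'. space s) = I' - J'" using D' by (simp add: stanley_decomp_def)
        ultimately obtain s where s: "s \<in> D'" "c \<in> space s" by blast
        then have sD: "s \<in> D''" unfolding D''_def using cn by auto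
        then have "c \<in> space (f s)" using sl s cn by auto
        then show "c \<in> (\<Union>x\<in>D. space x)" unfolding D_def using sD by auto
      qed
    qed
  qed
  have Dne: "D \<noteq> {}" and finD: "finite D" using decomp_min_bound(1)[OF dec An ne] dec
    by (auto simp: stanley_decomp_def)
  have "Min (sdim ` D) \<in> sdim ` D" using finD Dne by (intro Min_in) auto
  then obtain x where x: "x \<in> D" "Min (sdim ` D) = sdim x" by auto
  then obtain s where s: "s \<in> D''" "x = f s" unfolding D_def by auto
  have sD': "s \<in> D'" using s unfolding D''_def by auto
  have "Min (sdim ` D') \<le> sdim s" using finD' sD' by (intro Min_le) auto
  also have "\<dots> \<le> sdim (f s) + 1" by (rule sd[OF sD'])
  finally show ?thesis using dec x s by auto
qed


definition GG :: "nat \<Rightarrow> bool \<Rightarrow> (nat \<Rightarrow> int) \<times> nat set \<times> nat set \<Rightarrow> (nat \<Rightarrow> int) \<times> nat set \<times> nat set" where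
  "GG n b = (\<lambda>(u, Zp, Zn). if b then (u, insert n Zp, Zn) else (u(n := -1), Zp, insert n Zn))"

lemma extend_decomp:
  assumes An: "A \<subseteq> {..<n}" and IM: "I \<subseteq> mons n A" and JM: "J \<subseteq> mons n A"
    and I': "\<And>c. c \<in> I' \<longleftrightarrow> c(n := 0) \<in> I \<and> (L \<or> 0 \<le> c n)"
    and J': "\<And>c. c \<in> J' \<longleftrightarrow> c(n := 0) \<in> J \<and> (L \<or> 0 \<le> c n)"
    and A': "A' = (if L then insert n A else A)"
    and D: "stanley_decomp n A I J D" and ne: "I - J \<noteq> {}"
  shows "\<exists>D'. stanley_decomp (Suc n) A' I' J' D' \<and> Min (sdim ` D) + 1 \<le> Min (sdim ` D')"
proof -
  define D' where "D' = (\<lambda>(b, s). GG n b s) ` ({b. L \<or> b} \<times> D)"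
  have finD: "finite D" using D by (simp add: stanley_decomp_def)
  have ss: "stanley_space n A I J s" if "s \<in> D" for s using D that by (simp add: stanley_decomp_def)
  have info: "\<exists>u Zp Zn. s = (u, Zp, Zn) \<and> u n = 0 \<and> n \<notin> Zp \<and> n \<notin> Zn \<and> Zp \<subseteq> {..<n} \<and> Zn \<subseteq> A \<and> Zp \<inter> Zn = {}
      \<and> finite Zp \<and> finite Zn \<and> space s \<subseteq> I - J" if "s \<in> D" for s
  proof -
    obtain u Zp Zn where su: "s = (u, Zp, Zn)" by (cases s)
    have "stanley_space n A I J (u, Zp, Zn)" using ss[OF that] su by simp
    then have h: "Zp \<subseteq> {..<n}" "Zn \<subseteq> A" "Zp \<inter> Zn = {}" "space (u, Zp, Zn) \<subseteq> I - J"
      by (auto simp: stanley_space_iff)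
    have "u \<in> I" using h(4) u_in_space[of u Zp Zn] by auto
    then have "u \<in> mons n A" using IM by blast
    then have "u n = 0" by (simp add: mons_def)
    moreover have "finite Zp" by (rule finite_subset[OF h(1)]) simp
    moreover have "finite Zn" by (rule finite_subset[OF subset_trans[OF h(2) An]]) simp
    moreover have "n \<notin> Zp" using h(1) by auto
    moreover have "n \<notin> Zn" using h(2) An by auto
    ultimately show ?thesis using h unfolding su
      apply -
      apply (rule exI[of _ u], rule exI[of _ Zp], rule exI[of _ Zn])
      apply (intro conjI refl)
      apply assumption+
      done
  qed
  have spG: "space (GG n b s) = {c. c(n := 0) \<in> space s \<and> (0 \<le> c n \<longleftrightarrow> b)}" if sD: "s \<in> D" for s b
  proof -
    obtain u Zp Zn where h: "s = (u, Zp, Zn)" "u n = 0" "n \<notin> Zp" "n \<notin> Zn" using info[OF sD] by (elim exE conjE) blast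
    show ?thesis
    proof (cases b)
      case True
      then have e: "GG n b s = (u, insert n Zp, Zn)" by (simp add: GG_def h(1))
      show ?thesis
      proof (rule set_eqI)
        fix c
        show "c \<in> space (GG n b s) \<longleftrightarrow> c \<in> {c. c(n := 0) \<in> space s \<and> (0 \<le> c n \<longleftrightarrow> b)}"
          unfolding e mem_Collect_eq using space_lift1[where u=u and n=n and Zp=Zp and Zn=Zn and c=c, OF h(2-4)] True h(1)
          by simp
      qed
    next
      case False
      then have e: "GG n b s = (u(n := -1), Zp, insert n Zn)" by (simp add: GG_def h(1))
      show ?thesis
      proof (rule set_eqI)
        fix c
        show "c \<in> space (GG n b s) \<longleftrightarrow> c \<in> {c. c(n := 0) \<in> space s \<and> (0 \<le> c n \<longleftrightarrow> b)}"
          unfolding e mem_Collect_eq using space_lift2[where u=u and n=n and Zp=Zp and Zn=Zn and c=c, OF h(2-4)] False h(1)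
          by auto
      qed
    qed
  qed
  have sdG: "sdim (GG n b s) = sdim s + 1" if sD: "s \<in> D" for s b
  proof -
    obtain u Zp Zn where h: "s = (u, Zp, Zn)" "n \<notin> Zp" "n \<notin> Zn" "finite Zp" "finite Zn" using info[OF sD] by (elim exE conjE) blast
    then show ?thesis by (cases b) (auto simp: GG_def)
  qed
  have ssG: "stanley_space (Suc n) A' I' J' (GG n b s)" if sD: "s \<in> D" and Lb: "L \<or> b" for s b
  proof -
    obtain u Zp Zn where h: "s = (u, Zp, Zn)" "n \<notin> Zp" "n \<notin> Zn" "Zp \<subseteq> {..<n}" "Zn \<subseteq> A" "Zp \<inter> Zn = {}"
      "space s \<subseteq> I - J" using info[OF sD] by (elim exE conjE) blast
    have sub: "space (GG n b s) \<subseteq> I' - J'"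
    proof
      fix c assume "c \<in> space (GG n b s)"
      then have c: "c(n := 0) \<in> space s" "0 \<le> c n \<longleftrightarrow> b" using spG[OF sD] by auto
      then have "c(n := 0) \<in> I - J" using h(7) by auto
      moreover have "L \<or> 0 \<le> c n" using c(2) Lb by auto
      ultimately show "c \<in> I' - J'" using I'[of c] J'[of c] by auto
    qed
    show ?thesis
    proof (cases b)
      case True
      then have e: "GG n b s = (u, insert n Zp, Zn)" by (simp add: GG_def h(1))
      have "insert n Zp \<subseteq> {..<Suc n}" using h(4) by auto
      moreover have "Zn \<subseteq> A'" using h(5) A' by auto
      moreover have "insert n Zp \<inter> Zn = {}" using h(3,6) by auto
      ultimately show ?thesis using sub unfolding e stanley_space_iff by blast
    next
      case False
      then have "L" using Lb by simp
      have e: "GG n b s = (u(n := -1), Zp, insert n Zn)" using False by (simp add: GG_def h(1))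
      have "Zp \<subseteq> {..<Suc n}" using h(4) by auto
      moreover have "insert n Zn \<subseteq> A'" using h(5) A' \<open>L\<close> by auto
      moreover have "Zp \<inter> insert n Zn = {}" using h(2,6) by auto
      ultimately show ?thesis using sub unfolding e stanley_space_iff by blast
    qed
  qed
  have dec: "stanley_decomp (Suc n) A' I' J' D'"
    unfolding stanley_decomp_def
  proof (intro conjI ballI impI)
    show "finite D'" unfolding D'_def using finD by simp
  next
    fix x assume "x \<in> D'" then show "stanley_space (Suc n) A' I' J' x" unfolding D'_def using ssG by auto
  next
    fix x y assume x: "x \<in> D'" and y: "y \<in> D'" and xy: "x \<noteq> y"
    obtain b s where bs: "s \<in> D" "x = GG n b s" using x unfolding D'_def by auto
    obtain b' s' where bs': "s' \<in> D" "y = GG n b' s'" using y unfolding D'_def by auto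
    show "space x \<inter> space y = {}"
    proof (cases "s = s'")
      case True
      have "b \<noteq> b'"
      proof
        assume "b = b'"
        then have "x = y" using bs(2) bs'(2) True by simp
        then show False using xy by simp
      qed
      then show ?thesis using spG[OF bs(1), of b] spG[OF bs'(1), of b'] bs bs' by auto
    next
      case False
      then have "space s \<inter> space s' = {}" using D bs(1) bs'(1) by (simp add: stanley_decomp_def)
      then show ?thesis using spG[OF bs(1), of b] spG[OF bs'(1), of b'] bs bs' by auto
    qed
  next
    show "(\<Union>x\<in>D'. space x) = I' - J'"
    proof
      show "(\<Union>x\<in>D'. space x) \<subseteq> I' - J'"
      proof
        fix c assume "c \<in> (\<Union>x\<in>D'. space x)"
        then obtain x where x: "x \<in> D'" "c \<in> space x" by auto
        then obtain b s where bs: "s \<in> D" "L \<or> b" "x = GG n b s" unfolding D'_def by auto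
        have "stanley_space (Suc n) A' I' J' x" using ssG[OF bs(1,2)] bs(3) by simp
        then have "space x \<subseteq> I' - J'" by (cases x) (simp add: stanley_space_iff)
        then show "c \<in> I' - J'" using x(2) by auto
      qed
    next
      show "I' - J' \<subseteq> (\<Union>x\<in>D'. space x)"
      proof
        fix c assume c: "c \<in> I' - J'"
        then have c1: "c(n := 0) \<in> I - J" and c2: "L \<or> 0 \<le> c n" using I'[of c] J'[of c] by auto
        moreover have "(\<Union>s\<in>D. space s) = I - J" using D by (simp add: stanley_decomp_def)
        ultimately obtain s where s: "s \<in> D" "c(n := 0) \<in> space s" by blast
        define b where "b = (0 \<le> c n)"
        have "c \<in> space (GG n b s)" using spG[OF s(1), of b] s(2) b_def by auto
        moreover have "GG n b s \<in> D'" unfolding D'_def using s(1) c2 b_def by auto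
        ultimately show "c \<in> (\<Union>x\<in>D'. space x)" by auto
      qed
    qed
  qed
  have ne': "I' - J' \<noteq> {}"
  proof -
    obtain c where c: "c \<in> I - J" using ne by auto
    then have "c n = 0" using IM An by (auto simp: mons_def)
    then have "c(n := 0) = c" by auto
    then have "c \<in> I' - J'" using c I'[of c] J'[of c] \<open>c n = 0\<close> by auto
    then show ?thesis by auto
  qed
  have A'n: "A' \<subseteq> {..<Suc n}" using A' An by auto
  have D'ne: "D' \<noteq> {}" and finD': "finite D'" using decomp_min_bound(1)[OF dec A'n ne'] dec
    by (auto simp: stanley_decomp_def)
  have "Min (sdim ` D') \<in> sdim ` D'" using finD' D'ne by (intro Min_in) auto
  then obtain x where x: "x \<in> D'" "Min (sdim ` D') = sdim x" by auto
  then obtain b s where bs: "s \<in> D" "x = GG n b s" unfolding D'_def by auto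
  have "Min (sdim ` D) \<le> sdim s" using finD bs(1) by (intro Min_le) auto
  then have "Min (sdim ` D) + 1 \<le> sdim x" using sdG[OF bs(1), of b] bs(2) by simp
  then show ?thesis using dec x by auto
qed


lemma poly_step:
  assumes An: "A \<subseteq> {..<n}" and miI: "monomial_ideal n A I" and miJ: "monomial_ideal n A J" and JI: "J \<subset> I"
  shows "sdepth (Suc n) A (ext_poly n I) (ext_poly n J) = sdepth n A I J + 1"
proof -
  have IM: "I \<subseteq> mons n A" using miI by (simp add: monomial_ideal_def)
  have JM: "J \<subseteq> mons n A" using miJ by (simp add: monomial_ideal_def)
  have ne: "I - J \<noteq> {}" using JI by auto
  have I': "c \<in> ext_poly n I \<longleftrightarrow> c(n := 0) \<in> I \<and> (False \<or> 0 \<le> c n)" for c using ext_poly_iff[OF IM] by simp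
  have J': "c \<in> ext_poly n J \<longleftrightarrow> c(n := 0) \<in> J \<and> (False \<or> 0 \<le> c n)" for c using ext_poly_iff[OF JM] by simp
  have I'': "c \<in> ext_poly n I \<longleftrightarrow> c(n := 0) \<in> I \<and> c n \<in> {0..}" for c using ext_poly_iff[OF IM] by simp
  have J'': "c \<in> ext_poly n J \<longleftrightarrow> c(n := 0) \<in> J \<and> c n \<in> {0..}" for c using ext_poly_iff[OF JM] by simp
  have ne': "ext_poly n I - ext_poly n J \<noteq> {}"
  proof -
    obtain c where c: "c \<in> I - J" using ne by auto
    then have "c n = 0" using IM An by (auto simp: mons_def)
    then have "c(n := 0) = c" by auto
    then have "c \<in> ext_poly n I - ext_poly n J" using c I'[of c] J'[of c] \<open>c n = 0\<close> by auto
    then show ?thesis by auto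
  qed
  show ?thesis
  proof (rule sdepth_transfer[OF An _ ne ne' exists_decomp[OF An miI miJ]])
    show "A \<subseteq> {..<Suc n}" using An by auto
  next
    fix D assume D: "stanley_decomp n A I J D"
    have "A = (if False then insert n A else A)" by simp
    from extend_decomp[OF An IM JM I' J' this D ne]
    show "\<exists>D'. stanley_decomp (Suc n) A (ext_poly n I) (ext_poly n J) D' \<and> Min (sdim ` D) + 1 \<le> Min (sdim ` D')" .
  next
    fix D' assume D': "stanley_decomp (Suc n) A (ext_poly n I) (ext_poly n J) D'"
    have R0: "(0::int) \<in> {0..}" by simp
    have A': "A \<subseteq> insert n A" by auto
    from restrict_decomp[OF An IM JM I'' J'' R0 A' D' ne]
    show "\<exists>D. stanley_decomp n A I J D \<and> Min (sdim ` D') \<le> Min (sdim ` D) + 1" .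
  qed
qed

lemma laurent_step:
  assumes An: "A \<subseteq> {..<n}" and miI: "monomial_ideal n A I" and miJ: "monomial_ideal n A J" and JI: "J \<subset> I"
  shows "sdepth (Suc n) (insert n A) (ext_laurent n 1 I) (ext_laurent n 1 J) = sdepth n A I J + 1"
proof -
  have IM: "I \<subseteq> mons n A" using miI by (simp add: monomial_ideal_def)
  have JM: "J \<subseteq> mons n A" using miJ by (simp add: monomial_ideal_def)
  have ne: "I - J \<noteq> {}" using JI by auto
  have I': "c \<in> ext_laurent n 1 I \<longleftrightarrow> c(n := 0) \<in> I \<and> (True \<or> 0 \<le> c n)" for c using ext_laurent1_iff[OF IM] by simp
  have J': "c \<in> ext_laurent n 1 J \<longleftrightarrow> c(n := 0) \<in> J \<and> (True \<or> 0 \<le> c n)" for c using ext_laurent1_iff[OF JM] by simp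
  have I'': "c \<in> ext_laurent n 1 I \<longleftrightarrow> c(n := 0) \<in> I \<and> c n \<in> UNIV" for c using ext_laurent1_iff[OF IM] by simp
  have J'': "c \<in> ext_laurent n 1 J \<longleftrightarrow> c(n := 0) \<in> J \<and> c n \<in> UNIV" for c using ext_laurent1_iff[OF JM] by simp
  have ne': "ext_laurent n 1 I - ext_laurent n 1 J \<noteq> {}"
  proof -
    obtain c where c: "c \<in> I - J" using ne by auto
    then have "c n = 0" using IM An by (auto simp: mons_def)
    then have "c(n := 0) = c" by auto
    then have "c \<in> ext_laurent n 1 I - ext_laurent n 1 J" using c I'[of c] J'[of c] by auto
    then show ?thesis by auto
  qed
  show ?thesis
  proof (rule sdepth_transfer[OF An _ ne ne' exists_decomp[OF An miI miJ]])
    show "insert n A \<subseteq> {..<Suc n}" using An by auto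
  next
    fix D assume D: "stanley_decomp n A I J D"
    have "insert n A = (if True then insert n A else A)" by simp
    from extend_decomp[OF An IM JM I' J' this D ne]
    show "\<exists>D'. stanley_decomp (Suc n) (insert n A) (ext_laurent n 1 I) (ext_laurent n 1 J) D' \<and> Min (sdim ` D) + 1 \<le> Min (sdim ` D')" .
  next
    fix D' assume D': "stanley_decomp (Suc n) (insert n A) (ext_laurent n 1 I) (ext_laurent n 1 J) D'"
    have R0: "(0::int) \<in> UNIV" by simp
    have A': "insert n A \<subseteq> insert n A" by auto
    from restrict_decomp[OF An IM JM I'' J'' R0 A' D' ne]
    show "\<exists>D. stanley_decomp n A I J D \<and> Min (sdim ` D') \<le> Min (sdim ` D) + 1" .
  qed
qed


lemma ext_laurent_mem:
  "a \<in> ext_laurent n r X \<longleftrightarrow> (\<lambda>i. if i < n then a i else 0) \<in> X \<and> (\<forall>i. n + r \<le> i \<longrightarrow> a i = 0)"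
  unfolding ext_laurent_def by (rule mem_Collect_eq)

lemma restr_plus:
  "(\<lambda>i. if i < n then a i + unitv j i else 0) = (if j < n then (\<lambda>k. (\<lambda>i. if i < n then a i else 0) k + unitv j k) else (\<lambda>i. if i < n then a i else 0))"
  by (auto simp: fun_eq_iff unitv_def)

lemma restr_minus:
  "(\<lambda>i. if i < n then a i - unitv j i else 0) = (if j < n then (\<lambda>k. (\<lambda>i. if i < n then a i else 0) k - unitv j k) else (\<lambda>i. if i < n then a i else 0))"
  by (auto simp: fun_eq_iff unitv_def)

lemma mi_laurent:
  assumes mi: "monomial_ideal n A I" and An: "A \<subseteq> {..<n}"
  shows "monomial_ideal (n + r) (A \<union> {n..<n + r}) (ext_laurent n r I)"
proof -
  have IM: "I \<subseteq> mons n A" using mi by (simp add: monomial_ideal_def)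
  have c1: "ext_laurent n r I \<subseteq> mons (n + r) (A \<union> {n..<n + r})"
  proof
    fix a assume a: "a \<in> ext_laurent n r I"
    then have ra: "(\<lambda>i. if i < n then a i else 0) \<in> mons n A" and z: "\<forall>i. n + r \<le> i \<longrightarrow> a i = 0"
      using IM by (auto simp: ext_laurent_mem)
    show "a \<in> mons (n + r) (A \<union> {n..<n + r})" unfolding mons_def
    proof (intro CollectI conjI allI impI)
      fix i assume "n + r \<le> i" then show "a i = 0" using z by auto
    next
      fix i assume i: "i < n + r" "i \<notin> A \<union> {n..<n + r}"
      then have "i < n" "i \<notin> A" by auto
      then show "0 \<le> a i" using ra unfolding mons_def by auto
    qed
  qed
  have c2: "(\<lambda>k. a k + unitv i k) \<in> ext_laurent n r I" if a: "a \<in> ext_laurent n r I" and i: "i < n + r" for a i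
  proof -
    have ra: "(\<lambda>i. if i < n then a i else 0) \<in> I" and z: "\<forall>k. n + r \<le> k \<longrightarrow> a k = 0"
      using a by (auto simp: ext_laurent_mem)
    have "(\<lambda>k. (\<lambda>i. if i < n then a i else 0) k + unitv i k) \<in> I" if "i < n"
      using mi ra that by (auto simp: monomial_ideal_def)
    then have "(\<lambda>k. if k < n then a k + unitv i k else 0) \<in> I"
      using ra by (subst restr_plus) auto
    moreover have "\<forall>k. n + r \<le> k \<longrightarrow> a k + unitv i k = 0" using z i by (auto simp: unitv_def)
    ultimately show ?thesis by (simp add: ext_laurent_mem)
  qed
  have c3: "(\<lambda>k. a k - unitv j k) \<in> ext_laurent n r I" if a: "a \<in> ext_laurent n r I" and j: "j \<in> A \<union> {n..<n + r}" for a j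
  proof -
    have ra: "(\<lambda>i. if i < n then a i else 0) \<in> I" and z: "\<forall>k. n + r \<le> k \<longrightarrow> a k = 0"
      using a by (auto simp: ext_laurent_mem)
    have "(\<lambda>k. (\<lambda>i. if i < n then a i else 0) k - unitv j k) \<in> I" if "j < n"
      using mi ra that j by (auto simp: monomial_ideal_def)
    then have "(\<lambda>k. if k < n then a k - unitv j k else 0) \<in> I"
      using ra by (subst restr_minus) auto
    moreover have "\<forall>k. n + r \<le> k \<longrightarrow> a k - unitv j k = 0" using z j An by (auto simp: unitv_def)
    ultimately show ?thesis by (simp add: ext_laurent_mem)
  qed
  show ?thesis unfolding monomial_ideal_def using c1 c2 c3 by blast
qed

lemma laurent_compose:
  "ext_laurent (n + r) 1 (ext_laurent n r I) = ext_laurent n (Suc r) I"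
proof (rule set_eqI)
  fix a :: "nat \<Rightarrow> int"
  have e: "(\<lambda>i. if i < n then (if i < n + r then a i else 0) else 0) = (\<lambda>i. if i < n then a i else 0)"
    by (auto simp: fun_eq_iff)
  show "a \<in> ext_laurent (n + r) 1 (ext_laurent n r I) \<longleftrightarrow> a \<in> ext_laurent n (Suc r) I"
    unfolding ext_laurent_mem e by auto
qed

lemma laurent_zero:
  assumes "I \<subseteq> mons n A"
  shows "ext_laurent n 0 I = I"
proof (rule set_eqI)
  fix a
  show "a \<in> ext_laurent n 0 I \<longleftrightarrow> a \<in> I"
  proof
    assume "a \<in> ext_laurent n 0 I"
    then have h: "(\<lambda>i. if i < n then a i else 0) \<in> I" "\<forall>i. n \<le> i \<longrightarrow> a i = 0" by (auto simp: ext_laurent_mem)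
    have "(\<lambda>i. if i < n then a i else 0) = a" using h(2) by (auto simp: fun_eq_iff)
    then show "a \<in> I" using h(1) by simp
  next
    assume a: "a \<in> I"
    then have z: "\<forall>i. n \<le> i \<longrightarrow> a i = 0" using assms by (auto simp: mons_def)
    then have "(\<lambda>i. if i < n then a i else 0) = a" by (auto simp: fun_eq_iff)
    then show "a \<in> ext_laurent n 0 I" using a z by (simp add: ext_laurent_mem)
  qed
qed

lemma laurent_strict:
  assumes JI: "J \<subset> I" and IM: "I \<subseteq> mons n A"
  shows "ext_laurent n r J \<subset> ext_laurent n r I"
proof -
  have "ext_laurent n r J \<subseteq> ext_laurent n r I" using JI by (auto simp: ext_laurent_mem)
  moreover obtain c where c: "c \<in> I" "c \<notin> J" using JI by auto
  moreover have z: "\<forall>i. n \<le> i \<longrightarrow> c i = 0" using c IM by (auto simp: mons_def)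
  moreover have "(\<lambda>i. if i < n then c i else 0) = c" using z by (auto simp: fun_eq_iff)
  ultimately have "c \<in> ext_laurent n r I" "c \<notin> ext_laurent n r J"
    by (auto simp: ext_laurent_mem)
  then show ?thesis using \<open>ext_laurent n r J \<subseteq> ext_laurent n r I\<close> by auto
qed

theorem theorem4p1:
  fixes n :: nat and A :: "nat set" and I J :: "(nat \<Rightarrow> int) set"
  assumes "A \<subseteq> {..<n}"
    and "monomial_ideal n A I" and "monomial_ideal n A J" and "J \<subset> I"
  shows "sdepth (Suc n) A (ext_poly n I) (ext_poly n J) = sdepth n A I J + 1 \<and>
         sdepth (Suc n) (insert n A) (ext_laurent n 1 I) (ext_laurent n 1 J) = sdepth n A I J + 1 \<and>
         (\<forall>r. sdepth (n + r) (A \<union> {n..<n + r}) (ext_laurent n r I) (ext_laurent n r J)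
             = sdepth n A I J + r)"
proof (intro conjI allI)
  show "sdepth (Suc n) A (ext_poly n I) (ext_poly n J) = sdepth n A I J + 1"
    by (rule poly_step[OF assms])
  show "sdepth (Suc n) (insert n A) (ext_laurent n 1 I) (ext_laurent n 1 J) = sdepth n A I J + 1"
    by (rule laurent_step[OF assms])
  fix r
  have IM: "I \<subseteq> mons n A" using assms(2) by (simp add: monomial_ideal_def)
  have JM: "J \<subseteq> mons n A" using assms(3) by (simp add: monomial_ideal_def)
  show "sdepth (n + r) (A \<union> {n..<n + r}) (ext_laurent n r I) (ext_laurent n r J) = sdepth n A I J + r"
  proof (induction r)
    case 0
    show ?case using laurent_zero[OF IM] laurent_zero[OF JM] by simp
  next
    case (Suc r)
    have An': "A \<union> {n..<n + r} \<subseteq> {..<n + r}" using assms(1) by auto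
    have step: "sdepth (Suc (n + r)) (insert (n + r) (A \<union> {n..<n + r})) (ext_laurent (n + r) 1 (ext_laurent n r I))
        (ext_laurent (n + r) 1 (ext_laurent n r J)) = sdepth (n + r) (A \<union> {n..<n + r}) (ext_laurent n r I) (ext_laurent n r J) + 1"
      by (rule laurent_step[OF An' mi_laurent[OF assms(2,1)] mi_laurent[OF assms(3,1)] laurent_strict[OF assms(4) IM]])
    have e1: "insert (n + r) (A \<union> {n..<n + r}) = A \<union> {n..<n + Suc r}" by auto
    show ?case using step Suc.IH unfolding laurent_compose e1 by simp
  qed
qed

end
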